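(* Let $V=(x_1,\dots,x_n)$ be a list of $n$ real numbers in $[L,U]$, listed in non-decreasing order, and let $k$ be an integer with $k<n$. Then a $k$-maximal variance subset of $V$ can be obtained by removing $n-k$ consecutive elements of $V$, i.e. there exists a $k$-maximal variance subset of the form $\{x_1,\dots,x_i\}\cup\{x_{i+n-k+1},\dots,x_n\}$ for some $0\le i\le k$.
   Context: For a finite (multi)set $Q$ of reals with $|Q|=k$, $\mathrm{Var}[Q]=\frac{1}{k}\sum_{q\in Q}(q-\mu_Q)^2$ with $\mu_Q=\frac1k\sum_{q\in Q}q$. A subset $Q\subset V$ (a choice of $k$ of the $n$ entries) is a $k$-maximal variance subset of $V$ if $|Q|=k$ and $\mathrm{Var}[Q']\le\mathrm{Var}[Q]$ for every $Q'\subset V$ with $|Q'|=k$. *)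

theory Defs
  imports Main "HOL.Real"
begin

text \<open>A sub(multi)set of the list V is given by a set I of positions (0-based) in V.\<close>

definition mean_idx :: "real list \<Rightarrow> nat set \<Rightarrow> real" where
  "mean_idx V I = (\<Sum>i\<in>I. V ! i) / real (card I)"

definition var_idx :: "real list \<Rightarrow> nat set \<Rightarrow> real" where
  "var_idx V I = (\<Sum>i\<in>I. (V ! i - mean_idx V I)^2) / real (card I)"

definition is_kmaxvar :: "real list \<Rightarrow> nat \<Rightarrow> nat set \<Rightarrow> bool" where
  "is_kmaxvar V k I \<longleftrightarrow> I \<subseteq> {..<length V} \<and> card I = k \<and>
     (\<forall>J. J \<subseteq> {..<length V} \<and> card J = k \<longrightarrow> var_idx V J \<le> var_idx V I)"

end

theory Submission
  imports Defs
begin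

lemma var_formula:
  assumes "finite J"
  shows "var_idx V J = (\<Sum>i\<in>J. (V!i)^2) / real (card J) - ((\<Sum>i\<in>J. V!i) / real (card J))^2"
proof (cases "card J = 0")
  case True then show ?thesis by (simp add: var_idx_def)
next
  case False
  define m where "m = mean_idx V J"
  have c: "real (card J) > 0" using False by simp
  have "(\<Sum>i\<in>J. (V ! i - m)^2) = (\<Sum>i\<in>J. (V!i)^2 - 2*m*V!i + m^2)"
    by (rule sum.cong) (auto simp: power2_eq_square algebra_simps)
  also have "\<dots> = (\<Sum>i\<in>J. (V!i)^2) - 2*m*(\<Sum>i\<in>J. V!i) + real (card J) * m^2"
    by (simp add: sum.distrib sum_subtractf sum_distrib_left)
  finally have e: "(\<Sum>i\<in>J. (V ! i - m)^2) = (\<Sum>i\<in>J. (V!i)^2) - 2*m*(\<Sum>i\<in>J. V!i) + real (card J) * m^2" .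
  have s: "(\<Sum>i\<in>J. V!i) = real (card J) * m" using c by (simp add: m_def mean_idx_def)
  show ?thesis unfolding var_idx_def m_def[symmetric] e using c
    by (simp add: s field_simps power2_eq_square)
qed

lemma quad_lemma:
  fixes A B K a b c :: real
  assumes K: "K \<ge> 1" and ab: "a \<le> b" and bc: "b \<le> c"
  defines "q \<equiv> \<lambda>y. (A + y^2)/K - ((B+y)/K)^2"
  shows "q b \<le> q a \<or> q b \<le> q c"
proof -
  define \<alpha> where "\<alpha> = 1/K - 1/K^2"
  define \<beta> where "\<beta> = - 2*B/K^2"
  define \<gamma> where "\<gamma> = A/K - B^2/K^2"
  have Kp: "K > 0" using K by simp
  have qf: "q y = \<alpha>*y^2 + \<beta>*y + \<gamma>" for y
    unfolding q_def \<alpha>_def \<beta>_def \<gamma>_def using Kp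
    by (simp add: field_simps power2_eq_square)
  have al: "\<alpha> \<ge> 0" unfolding \<alpha>_def using K Kp
    by (simp add: field_simps power2_eq_square)
  have id: "(q b - q a)*(c-b) + (q b - q c)*(b-a) = -\<alpha>*(b-a)*(c-b)*(c-a)"
    unfolding qf by (simp add: algebra_simps power2_eq_square)
  have "\<alpha>*(b-a)*(c-b)*(c-a) \<ge> 0" using al ab bc by simp
  show ?thesis
  proof (rule ccontr)
    assume "\<not> ?thesis"
    hence h1: "q b - q a > 0" and h2: "q b - q c > 0" by auto
    show False
    proof (cases "a = b")
      case True then show ?thesis using h1 by simp
    next
      case False
      hence "(q b - q a)*(c-b) + (q b - q c)*(b-a) > 0"
        using h1 h2 ab bc
        by (smt (verit) mult_nonneg_nonneg mult_pos_pos)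
      then show ?thesis using id \<open>\<alpha>*(b-a)*(c-b)*(c-a) \<ge> 0\<close> by linarith
    qed
  qed
qed

lemma swap_var:
  assumes "finite R" "y \<notin> R"
  shows "var_idx V (insert y R) = ((\<Sum>i\<in>R. (V!i)^2) + (V!y)^2)/real (card R + 1)
     - (((\<Sum>i\<in>R. V!i) + V!y)/real (card R + 1))^2"
  using assms by (simp add: var_formula add.commute)

lemma swap_ok:
  assumes fin: "finite I" and b: "b \<in> I" and a: "a \<notin> I" and c: "c \<notin> I"
    and xab: "V!a \<le> V!b" and xbc: "V!b \<le> V!c"
  shows "var_idx V I \<le> var_idx V (insert a (I - {b})) \<or> var_idx V I \<le> var_idx V (insert c (I - {b}))"
proof -
  define R where "R = I - {b}"
  have fR: "finite R" using fin R_def by simp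
  have IR: "I = insert b R" using b R_def by auto
  have bR: "b \<notin> R" "a \<notin> R" "c \<notin> R" using a c R_def by auto
  define K where "K = real (card R + 1)"
  have K: "K \<ge> 1" unfolding K_def by simp
  define q where "q \<equiv> \<lambda>y. ((\<Sum>i\<in>R. (V!i)^2) + y^2)/K - (((\<Sum>i\<in>R. V!i)+y)/K)^2"
  have "q (V!b) \<le> q (V!a) \<or> q (V!b) \<le> q (V!c)"
    using quad_lemma[OF K xab xbc, of "\<Sum>i\<in>R. (V!i)^2" "\<Sum>i\<in>R. V!i"] unfolding q_def by simp
  moreover have "var_idx V (insert y R) = q (V!y)" if "y \<notin> R" for y
    using swap_var[OF fR that, of V] unfolding q_def K_def by simp
  ultimately show ?thesis using bR unfolding IR R_def[symmetric]
    by (metis IR R_def)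
qed

theorem mainTheorem3:
  fixes V :: "real list" and L U :: real and n k :: nat
  assumes "length V = n"
    and "\<forall>x\<in>set V. L \<le> x \<and> x \<le> U"
    and "sorted V"
    and "k < n"
  shows "\<exists>i\<le>k. is_kmaxvar V k ({0..<i} \<union> {i + n - k..<n})"
proof -
  define S where "S = {J. J \<subseteq> {..<n} \<and> card J = k}"
  have finS: "finite S" unfolding S_def
    by (rule finite_subset[of _ "Pow {..<n}"]) auto
  have neS: "{..<k} \<in> S" unfolding S_def using assms(4) by auto
  have "Max ((var_idx V) ` S) \<in> (var_idx V) ` S" using finS neS by (intro Max_in) auto
  then obtain I0 where I0S: "I0 \<in> S" and I0M: "var_idx V I0 = Max ((var_idx V) ` S)" by auto
  have I0: "I0 \<in> S" "\<forall>J\<in>S. var_idx V J \<le> var_idx V I0"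
    using I0S I0M finS by auto
  define M where "M = {I\<in>S. \<forall>J\<in>S. var_idx V J \<le> var_idx V I}"
  define sp where "sp I = Max ({..<n} - I) - Min ({..<n} - I)" for I
  have "I0 \<in> M" using I0 M_def by auto
  then obtain I where IM: "I \<in> M" and Imin: "\<forall>J. J \<in> M \<longrightarrow> sp I \<le> sp J"
    using ex_has_least_nat[of "\<lambda>I. I \<in> M" I0 sp] by blast
  have IS: "I \<subseteq> {..<n}" "card I = k" using IM unfolding M_def S_def by auto
  have finI: "finite I" using IS(1) finite_subset by blast
  define C where "C = {..<n} - I"
  have finC: "finite C" unfolding C_def by simp
  have cardC: "card C = n - k" unfolding C_def using IS finI by (simp add: card_Diff_subset)
  have neC: "C \<noteq> {}" using cardC assms(4) by auto
  have spI: "sp I = Max C - Min C" unfolding sp_def C_def by simp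
  have minC: "Min C \<in> C" and maxC: "Max C \<in> C" using finC neC by auto
  have bounds: "x \<in> C \<Longrightarrow> Min C \<le> x \<and> x \<le> Max C" for x using finC by auto
  have contig: "b \<in> C" if "Min C \<le> b" "b \<le> Max C" for b
  proof (rule ccontr)
    assume bC: "b \<notin> C"
    have bn: "b < n" using that maxC C_def by auto
    hence bI: "b \<in> I" using bC C_def by auto
    define a where "a = Min C"
    define c where "c = Max C"
    have ab: "a < b" using that bC minC a_def by (metis le_neq_implies_less)
    have bc: "b < c" using that bC maxC c_def by (metis le_neq_implies_less)
    have aI: "a \<notin> I" "a < n" and cI: "c \<notin> I" "c < n" using minC maxC a_def c_def C_def by auto
    have xab: "V!a \<le> V!b" using assms(3) ab bn assms(1) by (simp add: sorted_nth_mono)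
    have xbc: "V!b \<le> V!c" using assms(3) bc cI assms(1) by (simp add: sorted_nth_mono)
    have Iopt: "\<forall>J\<in>S. var_idx V J \<le> var_idx V I" using IM M_def by auto
    have inS: "insert y (I - {b}) \<in> S" if "y \<notin> I" "y < n" for y
    proof -
      have "card (insert y (I - {b})) = card (I - {b}) + 1" using finI that by simp
      also have "\<dots> = k"
      proof -
        have "card I > 0" using bI finI card_gt_0_iff by blast
        thus ?thesis using bI finI IS(2) by (simp add: card_Diff_singleton)
      qed
      finally show ?thesis unfolding S_def using IS(1) that by auto
    qed
    have Ca: "{..<n} - insert a (I - {b}) = insert b (C - {a})" using bI bn aI unfolding C_def by auto
    have Cc: "{..<n} - insert c (I - {b}) = insert b (C - {c})" using bI bn cI unfolding C_def by auto
    have spa: "sp (insert a (I - {b})) < sp I"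
    proof -
      let ?D = "insert b (C - {a})"
      have fD: "finite ?D" using finC by simp
      have "x \<le> c" if "x \<in> ?D" for x using that bounds bc c_def by auto
      hence mx: "Max ?D \<le> c" using fD by (simp)
      have "x > a" if "x \<in> ?D" for x using that bounds ab a_def by fastforce
      hence mn: "Min ?D > a" using fD by simp
      have "Min ?D \<le> Max ?D" using fD by (meson Min_le Max_ge insertI1 order_trans)
      thus ?thesis unfolding sp_def Ca spI C_def[symmetric] a_def[symmetric] c_def[symmetric]
        using mx mn ab bc by linarith
    qed
    have spc: "sp (insert c (I - {b})) < sp I"
    proof -
      let ?D = "insert b (C - {c})"
      have fD: "finite ?D" using finC by simp
      have "x < c" if "x \<in> ?D" for x using that bounds bc c_def by fastforce
      hence mx: "Max ?D < c" using fD by (simp)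
      have "x \<ge> a" if "x \<in> ?D" for x using that bounds ab a_def by fastforce
      hence mn: "Min ?D \<ge> a" using fD by simp
      have "Min ?D \<le> Max ?D" using fD by (meson Min_le Max_ge insertI1 order_trans)
      thus ?thesis unfolding sp_def Cc spI C_def[symmetric] a_def[symmetric] c_def[symmetric]
        using mx mn ab bc by linarith
    qed
    from swap_ok[OF finI bI aI(1) cI(1) xab xbc]
    show False
    proof
      assume h: "var_idx V I \<le> var_idx V (insert a (I - {b}))"
      have "insert a (I - {b}) \<in> M" unfolding M_def using inS[OF aI] Iopt h by force
      thus False using Imin spa by force
    next
      assume h: "var_idx V I \<le> var_idx V (insert c (I - {b}))"
      have "insert c (I - {b}) \<in> M" unfolding M_def using inS[OF cI] Iopt h by force
      thus False using Imin spc by force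
    qed
  qed
  define i where "i = Min C"
  define hi where "hi = Max C"
  have Ceq: "C = {i..hi}"
  proof (rule set_eqI)
    fix x show "x \<in> C \<longleftrightarrow> x \<in> {i..hi}"
      using contig[of x] bounds[of x] unfolding i_def hi_def by auto
  qed
  have "card C = hi + 1 - i" using Ceq by simp
  hence mx: "hi + 1 = i + n - k" using cardC bounds[OF minC] bounds[OF maxC] i_def hi_def assms(4) by linarith
  have "hi < n" using maxC C_def hi_def by auto
  hence ik: "i \<le> k" using mx by linarith
  have Ieq: "I = {0..<i} \<union> {i + n - k..<n}"
  proof -
    have "I = {..<n} - C" using IS(1) C_def by auto
    also have "\<dots> = {0..<i} \<union> {i + n - k..<n}" unfolding Ceq using mx ik assms(4) by auto
    finally show ?thesis .
  qed
  have "is_kmaxvar V k I" using IM unfolding M_def S_def is_kmaxvar_def assms(1) by auto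
  thus ?thesis using Ieq ik by blast
qed

end
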